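(* For every integer $r\ge 3$, $m(r)\ge (r-1)^{r-1}$.
   Context: A bi-hypergraph $\mathcal H=(V,E)$ consists of a finite vertex set $V$ and a set $E$ of subsets of $V$, called edges, with no edge contained in another. It is $r$-uniform if every edge has exactly $r$ elements. A mapping $f:V\to\mathbb N$ is a proper coloring of $\mathcal H$ if $1<|f(e)|<|e|$ for every $e\in E$, where $f(e)=\{f(v):v\in e\}$. $\mathcal H$ is colorable if it has a proper coloring, and uncolorable otherwise. A subhypergraph of $\mathcal H$ is a bi-hypergraph $(V',E')$ with $V'\subseteq V$, $E'\subseteq E$. $\mathcal H$ is minimal uncolorable if it is uncolorable but every proper subhypergraph of it is colorable. $m(r)$ denotes the smallest positive integer $m$ for which there exists a minimal uncolorable $r$-uniform bi-hypergraph with exactly $m$ edges. *)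

theory Defs
  imports Main
begin

definition bi_hypergraph :: "'a set \<Rightarrow> 'a set set \<Rightarrow> bool" where
  "bi_hypergraph V E \<longleftrightarrow> finite V \<and> (\<forall>e\<in>E. e \<subseteq> V)
     \<and> (\<forall>e\<in>E. \<forall>e'\<in>E. e \<subseteq> e' \<longrightarrow> e = e')"

definition uniform :: "nat \<Rightarrow> 'a set set \<Rightarrow> bool" where
  "uniform r E \<longleftrightarrow> (\<forall>e\<in>E. card e = r)"

definition proper_coloring :: "'a set set \<Rightarrow> ('a \<Rightarrow> nat) \<Rightarrow> bool" where
  "proper_coloring E f \<longleftrightarrow> (\<forall>e\<in>E. 1 < card (f ` e) \<and> card (f ` e) < card e)"

definition colorable :: "'a set \<Rightarrow> 'a set set \<Rightarrow> bool" where
  "colorable V E \<longleftrightarrow> (\<exists>f. proper_coloring E f)"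

definition subhypergraph :: "'a set \<Rightarrow> 'a set set \<Rightarrow> 'a set \<Rightarrow> 'a set set \<Rightarrow> bool" where
  "subhypergraph V' E' V E \<longleftrightarrow> bi_hypergraph V' E' \<and> V' \<subseteq> V \<and> E' \<subseteq> E"

definition minimal_uncolorable :: "'a set \<Rightarrow> 'a set set \<Rightarrow> bool" where
  "minimal_uncolorable V E \<longleftrightarrow> bi_hypergraph V E \<and> \<not> colorable V E
     \<and> (\<forall>V' E'. subhypergraph V' E' V E \<and> (V', E') \<noteq> (V, E) \<longrightarrow> colorable V' E')"

end

theory Submission
  imports Defs "HOL-Library.FuncSet"
begin

theorem mainTheorem2:
  fixes r :: nat and V :: "'a set" and E :: "'a set set"
  assumes "r \<ge> 3"
    and "minimal_uncolorable V E"
    and "uniform r E"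
  shows "card E \<ge> (r - 1) ^ (r - 1)"
proof -
  define k where "k = r - 1"
  define n where "n = card V"
  have k2: "k \<ge> 2" using assms(1) k_def by simp
  have bi: "bi_hypergraph V E" and nc: "\<not> colorable V E"
    using assms(2) unfolding minimal_uncolorable_def by auto
  have finV: "finite V" and sub: "\<And>e. e \<in> E \<Longrightarrow> e \<subseteq> V"
    using bi unfolding bi_hypergraph_def by auto
  have finE: "finite E"
    using finV sub by (meson Pow_iff finite_Pow_iff finite_subset subsetI)
  have cardE: "\<And>e. e \<in> E \<Longrightarrow> card e = r" using assms(3) unfolding uniform_def by auto
  define F where "F = PiE V (\<lambda>_. {0..<k})"
  define P where "P e c = PiE V (\<lambda>v. if v \<in> e then {c} else {0..<k})" for e c
  have cardF: "card F = k ^ n" unfolding F_def n_def by (simp add: card_PiE finV)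
  have cardP: "card (P e c) = k ^ (n - r)" if "e \<in> E" for e c
  proof -
    have "card (P e c) = (\<Prod>v\<in>V. card (if v \<in> e then {c} else {0..<k}))"
      unfolding P_def by (simp add: card_PiE finV)
    also have "\<dots> = (\<Prod>v\<in>V. if v \<in> e then 1 else k)"
      by (rule prod.cong) auto
    also have "\<dots> = (\<Prod>v\<in>V \<inter> {x. x \<in> e}. 1) * (\<Prod>v\<in>V \<inter> - {x. x \<in> e}. k)"
      by (rule prod.If_cases[OF finV])
    also have "\<dots> = k ^ card (V - e)"
      by (simp add: Diff_eq)
    also have "card (V - e) = n - r"
      using card_Diff_subset[OF finite_subset[OF sub[OF that] finV] sub[OF that]]
        cardE[OF that] n_def by simp
    finally show ?thesis .
  qed
  have cover: "F \<subseteq> (\<Union>e\<in>E. \<Union>c\<in>{0..<k}. P e c)"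
  proof
    fix f assume fF: "f \<in> F"
    have "\<not> proper_coloring E f" using nc unfolding colorable_def by auto
    then obtain e where eE: "e \<in> E" and bad: "\<not> (1 < card (f ` e) \<and> card (f ` e) < card e)"
      unfolding proper_coloring_def by auto
    have img: "f ` e \<subseteq> {0..<k}" using fF sub[OF eE] unfolding F_def by (auto simp: PiE_def Pi_def)
    have "card (f ` e) \<le> k" using card_mono[OF _ img] by simp
    then have "card (f ` e) < card e" using cardE[OF eE] k_def assms(1) by simp
    with bad have le1: "card (f ` e) \<le> 1" by simp
    have "e \<noteq> {}" using cardE[OF eE] assms(1) by auto
    then obtain x where xe: "x \<in> e" by auto
    have fin: "finite (f ` e)" using finite_subset[OF img] by simp
    have const: "\<forall>v\<in>e. f v = f x"
    proof
      fix v assume "v \<in> e"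
      then have "{f v, f x} \<subseteq> f ` e" using xe by auto
      then have "card {f v, f x} \<le> 1" using card_mono[OF fin] le1 by (meson le_trans)
      then show "f v = f x" by (cases "f v = f x") auto
    qed
    have cx: "f x \<in> {0..<k}" using img xe by auto
    have "f \<in> P e (f x)" using fF const unfolding F_def P_def by (auto simp: PiE_def Pi_def)
    then show "f \<in> (\<Union>e\<in>E. \<Union>c\<in>{0..<k}. P e c)" using eE cx by blast
  qed
  have "F \<noteq> {}" unfolding F_def using k2 by (simp add: PiE_eq_empty_iff)
  then obtain e0 where e0: "e0 \<in> E" using cover by blast
  have nr: "r \<le> n" using card_mono[OF finV sub[OF e0]] cardE[OF e0] n_def by simp
  have finP: "finite (P e c)" for e c unfolding P_def by (rule finite_PiE[OF finV]) simp
  have "finite (\<Union>e\<in>E. \<Union>c\<in>{0..<k}. P e c)" by (rule finite_UN_I[OF finE], rule finite_UN_I[OF finite_atLeastLessThan finP])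
  then have "card F \<le> card (\<Union>e\<in>E. \<Union>c\<in>{0..<k}. P e c)" by (rule card_mono[OF _ cover])
  also have "\<dots> \<le> (\<Sum>e\<in>E. card (\<Union>c\<in>{0..<k}. P e c))"
    by (rule card_UN_le[OF finE])
  also have "\<dots> \<le> (\<Sum>e\<in>E. (\<Sum>c\<in>{0..<k}. card (P e c)))"
    by (rule sum_mono) (rule card_UN_le, simp)
  also have "\<dots> = (\<Sum>e\<in>E. k * k ^ (n - r))"
    by (rule sum.cong) (auto simp: cardP)
  also have "\<dots> = card E * (k * k ^ (n - r))" by simp
  finally have ineq: "k ^ n \<le> card E * (k * k ^ (n - r))" using cardF by simp
  have nsplit: "n = (r - 1) + Suc (n - r)" using nr assms(1) by arith
  have "k ^ n = k ^ (r - 1) * k ^ Suc (n - r)" by (subst nsplit, rule power_add)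
  then have eq: "k ^ n = k ^ (r - 1) * (k * k ^ (n - r))" by (simp only: power_Suc)
  have pos: "0 < k * k ^ (n - r)" using k2 by simp
  have "k ^ (r - 1) * (k * k ^ (n - r)) \<le> card E * (k * k ^ (n - r))" using ineq eq by simp
  then have "k ^ (r - 1) \<le> card E" using pos by (rule mult_right_le_imp_le)
  then show ?thesis unfolding k_def .
qed

end
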